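(* Assume (A1), (A2') and (F1), and let $\lambda>0$. If $(u,v)\in W_\lambda\setminus\{(0,0)\}$ satisfies $\langle J'_\lambda(u,v),(u,v)\rangle\le0$, then there exists a unique $t_0\in(0,1]$ such that $t_0(u,v)\in\mathcal N_\lambda$.
   Context: Let $V=\mathbb{Z}^N$ be the integer lattice graph ($x\sim y$ iff $\sum_i|x_i-y_i|=1$), $\int_Vu\,d\mu=\sum_{x\in V}u(x)$. Fix $\alpha\in(0,N)$, $p\ge2$, $\gamma>\frac{(N+\alpha)p}{2N}$. $|\nabla u|^p(x)=\frac12\sum_{y\sim x}|u(y)-u(x)|^p$. $R_\alpha(x,y)=\frac{1}{|\Gamma(-\alpha)|}\int_0^\infty k_t(x,y)t^{\alpha-1}dt$ with $k_t$ the heat kernel of the discrete Laplacian $\Delta u(x)=\sum_{y\sim x}(u(y)-u(x))$; $(R_\alpha*f)(x)=\sum_yR_\alpha(x,y)f(y)$. (A1) $a,b:V\to[0,\infty)$ and $\Omega_a=\{a=0\}$, $\Omega_b=\{b=0\}$, $\Omega_a\cap\Omega_b$ are non-empty bounded domains; (A2') there exist $M_1,M_2>0$ with $\{a\le M_1\}$, $\{b\le M_2\}$ finite and non-empty; (F1) $F\in C^1(\mathbb{R}^2,[0,\infty))$, $F(tu,tv)=t^\gamma F(u,v)$ for $t>0$. $W^{1,p}(\mathbb{Z}^N)$: completion of finitely supported functions under $(\int_V(|\nabla u|^p+|u|^p))^{1/p}$. $W_{\lambda,h}=\{u\in W^{1,p}:\int_V(\lambda h+1)|u|^p<\infty\}$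 with $\|u\|_{\lambda,h}=(\int_V(|\nabla u|^p+(\lambda h+1)|u|^p))^{1/p}$; $W_\lambda=W_{\lambda,a}\times W_{\lambda,b}$, $\|(u,v)\|_\lambda=(\|u\|_{\lambda,a}^p+\|v\|_{\lambda,b}^p)^{1/p}$. $J_\lambda(u,v)=\frac1p\|(u,v)\|_\lambda^p-\frac1{2\gamma}\int_V(R_\alpha*F(u,v))F(u,v)d\mu$ with $\langle J'_\lambda(u,v),(u,v)\rangle=\|(u,v)\|_\lambda^p-\int_V(R_\alpha*F(u,v))F(u,v)d\mu$. $\mathcal N_\lambda=\{(u,v)\in W_\lambda\setminus\{(0,0)\}:\langle J'_\lambda(u,v),(u,v)\rangle=0\}$. *)

theory Defs
  imports "HOL-Analysis.Analysis"
begin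

type_synonym 'n vert = "int ^ 'n"

definition adj :: "'n::finite vert \<Rightarrow> 'n vert \<Rightarrow> bool" where
  "adj x y \<longleftrightarrow> (\<Sum>i\<in>UNIV. \<bar>x $ i - y $ i\<bar>) = 1"

definition connected_set :: "'n::finite vert set \<Rightarrow> bool" where
  "connected_set S \<longleftrightarrow> (\<forall>x\<in>S. \<forall>y\<in>S.
      (\<lambda>u w. u \<in> S \<and> w \<in> S \<and> adj u w)\<^sup>*\<^sup>* x y)"

text \<open>A bounded domain: nonempty, bounded (= finite in Z^N) and connected.\<close>
definition bounded_domain :: "'n::finite vert set \<Rightarrow> bool" where
  "bounded_domain S \<longleftrightarrow> S \<noteq> {} \<and> finite S \<and> connected_set S"

definition lap :: "('n::finite vert \<Rightarrow> real) \<Rightarrow> 'n vert \<Rightarrow> real" where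
  "lap f x = (\<Sum>y\<in>{y. adj x y}. f y - f x)"

definition heat_kernel :: "real \<Rightarrow> 'n::finite vert \<Rightarrow> 'n vert \<Rightarrow> real" where
  "heat_kernel t x y =
     (\<Sum>n. t ^ n / fact n * ((lap ^^ n) (\<lambda>z. if z = y then 1 else 0)) x)"

definition R_alpha :: "real \<Rightarrow> 'n::finite vert \<Rightarrow> 'n vert \<Rightarrow> real" where
  "R_alpha \<alpha> x y = 1 / \<bar>Gamma (- \<alpha>)\<bar> *
     (LBINT t:{0<..}. heat_kernel t x y * t powr (\<alpha> - 1))"

definition riesz_conv :: "real \<Rightarrow> ('n::finite vert \<Rightarrow> real) \<Rightarrow> 'n vert \<Rightarrow> real" where
  "riesz_conv \<alpha> f x = (\<Sum>\<^sub>\<infinity>y. R_alpha \<alpha> x y * f y)"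

definition grad_p :: "real \<Rightarrow> ('n::finite vert \<Rightarrow> real) \<Rightarrow> 'n vert \<Rightarrow> real" where
  "grad_p p u x = 1/2 * (\<Sum>y\<in>{y. adj x y}. \<bar>u y - u x\<bar> powr p)"

definition w1p_norm :: "real \<Rightarrow> ('n::finite vert \<Rightarrow> real) \<Rightarrow> real" where
  "w1p_norm p u = (\<Sum>\<^sub>\<infinity>x. grad_p p u x + \<bar>u x\<bar> powr p) powr (1 / p)"

text \<open>W^{1,p}: completion (realised as closure in the space of functions of finite
  norm) of the finitely supported functions.\<close>
definition W1p :: "real \<Rightarrow> ('n::finite vert \<Rightarrow> real) set" where
  "W1p p = {u. (\<lambda>x. grad_p p u x + \<bar>u x\<bar> powr p) summable_on UNIV \<and>
     (\<exists>\<phi>::nat \<Rightarrow> 'n vert \<Rightarrow> real. (\<forall>k. finite {x. \<phi> k x \<noteq> 0}) \<and>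
        (\<lambda>k. w1p_norm p (\<lambda>x. \<phi> k x - u x)) \<longlonglongrightarrow> 0)}"

definition W_lh :: "real \<Rightarrow> real \<Rightarrow> ('n::finite vert \<Rightarrow> real) \<Rightarrow> ('n vert \<Rightarrow> real) set" where
  "W_lh p lam h = {u \<in> W1p p. (\<lambda>x. (lam * h x + 1) * \<bar>u x\<bar> powr p) summable_on UNIV}"

definition norm_lh :: "real \<Rightarrow> real \<Rightarrow> ('n::finite vert \<Rightarrow> real) \<Rightarrow> ('n vert \<Rightarrow> real) \<Rightarrow> real" where
  "norm_lh p lam h u =
     (\<Sum>\<^sub>\<infinity>x. grad_p p u x + (lam * h x + 1) * \<bar>u x\<bar> powr p) powr (1 / p)"

definition W_lambda :: "real \<Rightarrow> real \<Rightarrow> ('n::finite vert \<Rightarrow> real) \<Rightarrow> ('n vert \<Rightarrow> real)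
    \<Rightarrow> (('n vert \<Rightarrow> real) \<times> ('n vert \<Rightarrow> real)) set" where
  "W_lambda p lam a b = W_lh p lam a \<times> W_lh p lam b"

definition norm_lambda :: "real \<Rightarrow> real \<Rightarrow> ('n::finite vert \<Rightarrow> real) \<Rightarrow> ('n vert \<Rightarrow> real)
    \<Rightarrow> ('n vert \<Rightarrow> real) \<Rightarrow> ('n vert \<Rightarrow> real) \<Rightarrow> real" where
  "norm_lambda p lam a b u v =
     ((norm_lh p lam a u) powr p + (norm_lh p lam b v) powr p) powr (1 / p)"

definition choquard_term :: "real \<Rightarrow> (real \<Rightarrow> real \<Rightarrow> real) \<Rightarrow> ('n::finite vert \<Rightarrow> real)
    \<Rightarrow> ('n vert \<Rightarrow> real) \<Rightarrow> real" where
  "choquard_term \<alpha> F u v =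
     (\<Sum>\<^sub>\<infinity>x. riesz_conv \<alpha> (\<lambda>y. F (u y) (v y)) x * F (u x) (v x))"

definition J_lambda :: "real \<Rightarrow> real \<Rightarrow> real \<Rightarrow> real \<Rightarrow> (real \<Rightarrow> real \<Rightarrow> real)
    \<Rightarrow> ('n::finite vert \<Rightarrow> real) \<Rightarrow> ('n vert \<Rightarrow> real)
    \<Rightarrow> ('n vert \<Rightarrow> real) \<Rightarrow> ('n vert \<Rightarrow> real) \<Rightarrow> real" where
  "J_lambda p \<alpha> \<gamma> lam F a b u v =
     1 / p * (norm_lambda p lam a b u v) powr p - 1 / (2 * \<gamma>) * choquard_term \<alpha> F u v"

text \<open>\<langle>J'_\<lambda>(u,v),(u,v)\<rangle>, as given in the paper.\<close>
definition J_deriv_pair :: "real \<Rightarrow> real \<Rightarrow> real \<Rightarrow> (real \<Rightarrow> real \<Rightarrow> real)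
    \<Rightarrow> ('n::finite vert \<Rightarrow> real) \<Rightarrow> ('n vert \<Rightarrow> real)
    \<Rightarrow> ('n vert \<Rightarrow> real) \<Rightarrow> ('n vert \<Rightarrow> real) \<Rightarrow> real" where
  "J_deriv_pair p \<alpha> lam F a b u v =
     (norm_lambda p lam a b u v) powr p - choquard_term \<alpha> F u v"

definition nehari :: "real \<Rightarrow> real \<Rightarrow> real \<Rightarrow> (real \<Rightarrow> real \<Rightarrow> real)
    \<Rightarrow> ('n::finite vert \<Rightarrow> real) \<Rightarrow> ('n vert \<Rightarrow> real)
    \<Rightarrow> (('n vert \<Rightarrow> real) \<times> ('n vert \<Rightarrow> real)) set" where
  "nehari p \<alpha> lam F a b = {(u, v). (u, v) \<in> W_lambda p lam a b \<and> (u, v) \<noteq> ((\<lambda>_. 0), (\<lambda>_. 0)) \<and>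
       J_deriv_pair p \<alpha> lam F a b u v = 0}"

definition hypA1 :: "('n::finite vert \<Rightarrow> real) \<Rightarrow> ('n vert \<Rightarrow> real) \<Rightarrow> bool" where
  "hypA1 a b \<longleftrightarrow> (\<forall>x. a x \<ge> 0 \<and> b x \<ge> 0) \<and>
     bounded_domain {x. a x = 0} \<and> bounded_domain {x. b x = 0} \<and>
     bounded_domain ({x. a x = 0} \<inter> {x. b x = 0})"

definition hypA2' :: "('n::finite vert \<Rightarrow> real) \<Rightarrow> ('n vert \<Rightarrow> real) \<Rightarrow> bool" where
  "hypA2' a b \<longleftrightarrow> (\<exists>M1 M2. M1 > 0 \<and> M2 > 0 \<and>
     finite {x. a x \<le> M1} \<and> {x. a x \<le> M1} \<noteq> {} \<and>
     finite {x. b x \<le> M2} \<and> {x. b x \<le> M2} \<noteq> {})"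

definition hypF1 :: "real \<Rightarrow> (real \<Rightarrow> real \<Rightarrow> real) \<Rightarrow> bool" where
  "hypF1 \<gamma> F \<longleftrightarrow> (\<forall>u v. F u v \<ge> 0) \<and>
     (\<exists>F'. (\<forall>z. ((\<lambda>(u, v). F u v) has_derivative blinfun_apply (F' z)) (at z)) \<and>
           continuous_on UNIV F') \<and>
     (\<forall>t u v. t > 0 \<longrightarrow> F (t * u) (t * v) = t powr \<gamma> * F u v)"

end

theory Submission
  imports Defs
begin

lemma abs_scale:
  fixes t a p :: real assumes "t > 0"
  shows "\<bar>t * a\<bar> powr p = t powr p * \<bar>a\<bar> powr p"
  using assms by (simp add: abs_mult powr_mult)

lemma grad_scale:
  assumes "(t::real) > 0"
  shows "grad_p p (\<lambda>x. t * u x) x = t powr p * grad_p p u x"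
proof -
  have "\<And>y. \<bar>t * u y - t * u x\<bar> powr p = t powr p * \<bar>u y - u x\<bar> powr p"
    using abs_scale[OF assms] by (metis right_diff_distrib)
  then show ?thesis unfolding grad_p_def by (simp add: sum_distrib_left)
qed

lemma grad_nonneg: "grad_p p u x \<ge> 0"
  unfolding grad_p_def by (simp add: sum_nonneg)

lemma w1p_scale:
  assumes "(t::real) > 0" "p > 0"
  shows "w1p_norm p (\<lambda>x. t * w x) = t * w1p_norm p w"
proof -
  have e: "(\<lambda>x. grad_p p (\<lambda>x. t * w x) x + \<bar>t * w x\<bar> powr p)
        = (\<lambda>x. t powr p * (grad_p p w x + \<bar>w x\<bar> powr p))"
    by (simp add: grad_scale[OF assms(1)] abs_scale[OF assms(1)] distrib_left mult.left_commute)
  have "(t powr p) powr (1/p) = t" using assms by (simp add: powr_powr)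
  then show ?thesis unfolding w1p_norm_def e infsum_cmult_right' powr_mult by simp
qed

lemma W1p_scale:
  assumes "(t::real) > 0" "p > 0" "u \<in> W1p p"
  shows "(\<lambda>x. t * u x) \<in> W1p p"
proof -
  have e: "(\<lambda>x. grad_p p (\<lambda>x. t * u x) x + \<bar>t * u x\<bar> powr p)
        = (\<lambda>x. t powr p * (grad_p p u x + \<bar>u x\<bar> powr p))"
    by (simp add: grad_scale[OF assms(1)] abs_scale[OF assms(1)] distrib_left mult.left_commute)
  from assms(3) obtain \<phi> :: "nat \<Rightarrow> _" where ph: "\<forall>k. finite {x. \<phi> k x \<noteq> 0}"
    "(\<lambda>k. w1p_norm p (\<lambda>x. \<phi> k x - u x)) \<longlonglongrightarrow> 0"
    and s: "(\<lambda>x. grad_p p u x + \<bar>u x\<bar> powr p) summable_on UNIV"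
    unfolding W1p_def by blast
  define \<psi> where "\<psi> = (\<lambda>k x. t * \<phi> k x)"
  have "\<forall>k. finite {x. \<psi> k x \<noteq> 0}" using ph(1) assms(1) by (simp add: \<psi>_def)
  moreover have "(\<lambda>k. w1p_norm p (\<lambda>x. \<psi> k x - t * u x)) \<longlonglongrightarrow> 0"
  proof -
    have "\<And>k. w1p_norm p (\<lambda>x. \<psi> k x - t * u x) = t * w1p_norm p (\<lambda>x. \<phi> k x - u x)"
      using w1p_scale[OF assms(1,2), of "\<lambda>x. \<phi> _ x - u x"]
      by (simp add: \<psi>_def right_diff_distrib)
    moreover have "(\<lambda>k. t * w1p_norm p (\<lambda>x. \<phi> k x - u x)) \<longlonglongrightarrow> t * 0"
      by (intro tendsto_mult tendsto_const ph(2))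
    ultimately show ?thesis by simp
  qed
  moreover have "(\<lambda>x. grad_p p (\<lambda>x. t * u x) x + \<bar>t * u x\<bar> powr p) summable_on UNIV"
    unfolding e by (intro summable_on_cmult_right s)
  ultimately show ?thesis unfolding W1p_def by blast
qed

lemma Wlh_scale:
  assumes "(t::real) > 0" "p > 0" "u \<in> W_lh p lam h"
  shows "(\<lambda>x. t * u x) \<in> W_lh p lam h"
proof -
  have e: "(\<lambda>x. (lam * h x + 1) * \<bar>t * u x\<bar> powr p) = (\<lambda>x. t powr p * ((lam * h x + 1) * \<bar>u x\<bar> powr p))"
    by (simp add: abs_scale[OF assms(1)] mult.left_commute)
  have "(\<lambda>x. (lam * h x + 1) * \<bar>t * u x\<bar> powr p) summable_on UNIV"
    unfolding e using assms(3) unfolding W_lh_def by (auto intro: summable_on_cmult_right)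
  then show ?thesis using assms W1p_scale[OF assms(1,2)] unfolding W_lh_def by auto
qed

definition Sh where "Sh p lam h u = (\<Sum>\<^sub>\<infinity>x. grad_p p u x + (lam * h x + 1) * \<bar>u x\<bar> powr p)"

lemma Sh_nonneg:
  assumes "lam \<ge> 0" "\<forall>x. h x \<ge> 0"
  shows "Sh p lam h u \<ge> 0"
  unfolding Sh_def using assms grad_nonneg
  by (intro infsum_nonneg) (auto intro!: add_nonneg_nonneg mult_nonneg_nonneg)

lemma Sh_scale:
  assumes "(t::real) > 0"
  shows "Sh p lam h (\<lambda>x. t * u x) = t powr p * Sh p lam h u"
proof -
  have e: "(\<lambda>x. grad_p p (\<lambda>x. t * u x) x + (lam * h x + 1) * \<bar>t * u x\<bar> powr p)
        = (\<lambda>x. t powr p * (grad_p p u x + (lam * h x + 1) * \<bar>u x\<bar> powr p))"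
    by (simp add: grad_scale[OF assms(1)] abs_scale[OF assms(1)] distrib_left mult.left_commute)
  show ?thesis unfolding Sh_def e infsum_cmult_right' ..
qed

lemma normlh_p:
  assumes "lam \<ge> 0" "\<forall>x. h x \<ge> 0" "p > 0"
  shows "norm_lh p lam h u powr p = Sh p lam h u"
  using Sh_nonneg[OF assms(1,2)] assms(3) unfolding norm_lh_def Sh_def[symmetric]
  by (simp add: powr_powr)

lemma normlam_p:
  assumes "lam \<ge> 0" "\<forall>x. a x \<ge> 0" "\<forall>x. b x \<ge> 0" "p > 0"
  shows "norm_lambda p lam a b u v powr p = Sh p lam a u + Sh p lam b v"
proof -
  have "norm_lh p lam a u powr p + norm_lh p lam b v powr p \<ge> 0" by simp
  then show ?thesis unfolding norm_lambda_def using assms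
    by (simp add: powr_powr normlh_p)
qed

lemma Sh_pos:
  assumes "lam \<ge> 0" "\<forall>x. h x \<ge> 0" "p > 0" "u \<in> W_lh p lam h" "u x0 \<noteq> 0"
  shows "Sh p lam h u > 0"
proof -
  let ?f = "\<lambda>x. grad_p p u x + (lam * h x + 1) * \<bar>u x\<bar> powr p"
  from assms(4) have s1: "(\<lambda>x. grad_p p u x + \<bar>u x\<bar> powr p) summable_on UNIV"
    and s2: "(\<lambda>x. (lam * h x + 1) * \<bar>u x\<bar> powr p) summable_on UNIV"
    unfolding W_lh_def W1p_def by auto
  have "(\<lambda>x. grad_p p u x) summable_on UNIV"
    by (rule summable_on_comparison_test[OF s1]) (auto simp: grad_nonneg)
  then have s: "?f summable_on UNIV" using s2 by (rule summable_on_add)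
  have pos: "?f x0 > 0"
  proof -
    have "(lam * h x0 + 1) * \<bar>u x0\<bar> powr p > 0"
      using assms by (intro mult_pos_pos) (auto intro: add_nonneg_pos)
    then show ?thesis using grad_nonneg[of p u x0] by linarith
  qed
  have "infsum ?f {x0} \<le> infsum ?f UNIV"
    using assms(1,2) grad_nonneg
    by (intro infsum_mono2[OF _ s]) (auto intro!: add_nonneg_nonneg mult_nonneg_nonneg)
  then show ?thesis using pos unfolding Sh_def by simp
qed

lemma choq_scale:
  assumes "(t::real) > 0" "hypF1 \<gamma> F"
  shows "choquard_term \<alpha> F (\<lambda>x. t * u x) (\<lambda>x. t * v x) = t powr (2*\<gamma>) * choquard_term \<alpha> F u v"
proof -
  have hF: "\<And>x y. F (t * x) (t * y) = t powr \<gamma> * F x y" using assms unfolding hypF1_def by blast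
  have rc: "\<And>x. riesz_conv \<alpha> (\<lambda>y. t powr \<gamma> * F (u y) (v y)) x = t powr \<gamma> * riesz_conv \<alpha> (\<lambda>y. F (u y) (v y)) x"
    unfolding riesz_conv_def
    by (simp add: infsum_cmult_right'[symmetric] algebra_simps)
  have "t powr (2*\<gamma>) = t powr \<gamma> * t powr \<gamma>" by (simp add: powr_add[symmetric])
  then show ?thesis unfolding choquard_term_def hF rc
    by (simp add: infsum_cmult_right'[symmetric] algebra_simps)
qed

theorem lemma2p8:
  fixes a b :: "int ^ 'n::finite \<Rightarrow> real"
    and F :: "real \<Rightarrow> real \<Rightarrow> real"
    and p \<alpha> \<gamma> lam :: real
    and u v :: "int ^ 'n \<Rightarrow> real"
  assumes "0 < \<alpha>" "\<alpha> < real CARD('n)"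
    and "p \<ge> 2"
    and "\<gamma> > (real CARD('n) + \<alpha>) * p / (2 * real CARD('n))"
    and "hypA1 a b" and "hypA2' a b" and "hypF1 \<gamma> F"
    and "lam > 0"
    and "(u, v) \<in> W_lambda p lam a b" and "(u, v) \<noteq> ((\<lambda>_. 0), (\<lambda>_. 0))"
    and "J_deriv_pair p \<alpha> lam F a b u v \<le> 0"
  shows "\<exists>!t0. t0 \<in> {0<..1} \<and>
           ((\<lambda>x. t0 * u x), (\<lambda>x. t0 * v x)) \<in> nehari p \<alpha> lam F a b"
proof -
  have ha: "\<forall>x. a x \<ge> 0" and hb: "\<forall>x. b x \<ge> 0" using assms(5) unfolding hypA1_def by auto
  have p0: "p > 0" using assms(3) by linarith
  have l0: "lam \<ge> 0" using assms(8) by linarith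
  have uW: "u \<in> W_lh p lam a" and vW: "v \<in> W_lh p lam b" using assms(9) unfolding W_lambda_def by auto
  define A where "A = Sh p lam a u + Sh p lam b v"
  define B where "B = choquard_term \<alpha> F u v"
  have A0: "A > 0"
  proof -
    obtain x0 where "u x0 \<noteq> 0 \<or> v x0 \<noteq> 0" using assms(10) by fastforce
    then show ?thesis unfolding A_def
      using Sh_pos[OF l0 ha p0 uW, of x0] Sh_pos[OF l0 hb p0 vW, of x0]
        Sh_nonneg[OF l0 ha, of p u] Sh_nonneg[OF l0 hb, of p v] by force
  qed
  have AB: "A \<le> B" using assms(11) unfolding J_deriv_pair_def A_def B_def
    normlam_p[OF l0 ha hb p0] by simp
  have B0: "B > 0" using A0 AB by linarith
  have JD: "J_deriv_pair p \<alpha> lam F a b (\<lambda>x. t * u x) (\<lambda>x. t * v x) = t powr p * A - t powr (2*\<gamma>) * B"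
    if "t > 0" for t
    unfolding J_deriv_pair_def normlam_p[OF l0 ha hb p0] Sh_scale[OF that]
      choq_scale[OF that assms(7)] A_def B_def by (simp add: algebra_simps)
  have N0: "real CARD('n) > 0" by simp
  define d where "d = 2*\<gamma> - p"
  have d0: "d > 0"
  proof -
    have "(real CARD('n) + \<alpha>) * p / (2 * real CARD('n)) = p/2 + \<alpha>*p/(2*real CARD('n))"
      using N0 by (simp add: field_simps)
    moreover have "\<alpha>*p/(2*real CARD('n)) > 0" using assms(1) p0 N0 by simp
    ultimately show ?thesis using assms(4) unfolding d_def by linarith
  qed
  have eqv: "J_deriv_pair p \<alpha> lam F a b (\<lambda>x. t * u x) (\<lambda>x. t * v x) = 0 \<longleftrightarrow> t powr d = A / B"
    if "t > 0" for t
  proof -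
    have "t powr (2*\<gamma>) = t powr p * t powr d" unfolding d_def by (simp add: powr_add[symmetric])
    moreover have "t powr p > 0" using that by simp
    ultimately show ?thesis unfolding JD[OF that] using B0 by (auto simp: field_simps)
  qed
  have mem: "((\<lambda>x. t * u x), (\<lambda>x. t * v x)) \<in> nehari p \<alpha> lam F a b \<longleftrightarrow> t powr d = A / B"
    if "t > 0" for t
  proof -
    have "((\<lambda>x. t * u x), (\<lambda>x. t * v x)) \<in> W_lambda p lam a b"
      unfolding W_lambda_def using Wlh_scale[OF that p0 uW] Wlh_scale[OF that p0 vW] by simp
    moreover have "((\<lambda>x. t * u x), (\<lambda>x. t * v x)) \<noteq> ((\<lambda>_. 0), (\<lambda>_. 0))"
    proof
      assume "((\<lambda>x. t * u x), (\<lambda>x. t * v x)) = ((\<lambda>_. 0), (\<lambda>_. 0))"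
      then have "\<forall>x. t * u x = 0" "\<forall>x. t * v x = 0" by (auto dest: fun_cong)
      then have "u = (\<lambda>_. 0)" "v = (\<lambda>_. 0)" using that by auto
      then show False using assms(10) by simp
    qed
    ultimately show ?thesis unfolding nehari_def using eqv[OF that] by simp
  qed
  define t0 where "t0 = (A / B) powr (1 / d)"
  have AB0: "A / B > 0" using A0 B0 by simp
  have t0p: "t0 > 0" unfolding t0_def using AB0 powr_gt_zero by (metis less_irrefl)
  have t01: "t0 \<le> 1"
  proof -
    have "A / B \<le> 1" using AB B0 by simp
    then have "(A / B) powr (1/d) \<le> 1 powr (1/d)" using AB0 d0 by (intro powr_mono2) auto
    then show ?thesis unfolding t0_def by simp
  qed
  have t0d: "t0 powr d = A / B" proof -
    have "\<bar>A\<bar> = A" "\<bar>B\<bar> = B" "A \<noteq> 0" "B \<noteq> 0" using A0 B0 by auto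
    then show ?thesis unfolding t0_def using d0 AB0 by (simp add: powr_powr)
  qed
  show ?thesis
  proof (rule ex1I[of _ t0])
    show "t0 \<in> {0<..1} \<and> ((\<lambda>x. t0 * u x), (\<lambda>x. t0 * v x)) \<in> nehari p \<alpha> lam F a b"
      using t0p t01 mem[OF t0p] t0d by simp
  next
    fix t assume h: "t \<in> {0<..1} \<and> ((\<lambda>x. t * u x), (\<lambda>x. t * v x)) \<in> nehari p \<alpha> lam F a b"
    then have tp: "t > 0" by simp
    then have "t powr d = A / B" using mem h by simp
    then have "(t powr d) powr (1/d) = t0" unfolding t0_def by simp
    then show "t = t0" using tp d0 by (simp add: powr_powr)
  qed
qed

end
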